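(* Let $G$ be a bipartite graph and let $X$ be a vertex parameter. Then the token sliding $X$-reconfiguration graph $\mathcal{R}^{\mathrm{TS}}_X(G)$ is bipartite.
   Context: All graphs are finite and simple. A graph parameter $X$ is a vertex parameter if there is a property $x$ of vertex subsets such that for every graph $G$, $X(G)$ equals either (for every graph) the maximum, or (for every graph) the minimum, of $|B|$ over all $B\subseteq V(G)$ having property $x$ in $G$. The token sliding $X$-reconfiguration graph $\mathcal{R}^{\mathrm{TS}}_X(G)$ has as vertices all sets $S\subseteq V(G)$ with $|S|=X(G)$ having property $x$ in $G$; two such sets $S_1,S_2$ are adjacent iff there exist $v_1\in S_1\setminus S_2$, $v_2\in S_2\setminus S_1$ with $S_1\setminus\{v_1\}=S_2\setminus\{v_2\}$ and $v_1v_2\in E(G)$. *)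

theory Defs
  imports Main
begin

definition simple_graph :: "'a set \<Rightarrow> 'a set set \<Rightarrow> bool" where
  "simple_graph V E \<longleftrightarrow> finite V \<and>
     (\<forall>e\<in>E. \<exists>u v. e = {u, v} \<and> u \<noteq> v \<and> u \<in> V \<and> v \<in> V)"

definition bipartite :: "'a set \<Rightarrow> 'a set set \<Rightarrow> bool" where
  "bipartite V E \<longleftrightarrow> (\<exists>A B. A \<union> B = V \<and> A \<inter> B = {} \<and>
     (\<forall>e\<in>E. \<exists>a\<in>A. \<exists>b\<in>B. e = {a, b}))"

definition vertex_parameter ::
  "('a set \<Rightarrow> 'a set set \<Rightarrow> nat) \<Rightarrow> ('a set \<Rightarrow> 'a set set \<Rightarrow> 'a set \<Rightarrow> bool) \<Rightarrow> bool" where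
  "vertex_parameter X P \<longleftrightarrow>
     (\<forall>V E. simple_graph V E \<longrightarrow> X V E = Max {card B | B. B \<subseteq> V \<and> P V E B}) \<or>
     (\<forall>V E. simple_graph V E \<longrightarrow> X V E = Min {card B | B. B \<subseteq> V \<and> P V E B})"

definition TS_vertices ::
  "('a set \<Rightarrow> 'a set set \<Rightarrow> nat) \<Rightarrow> ('a set \<Rightarrow> 'a set set \<Rightarrow> 'a set \<Rightarrow> bool)
   \<Rightarrow> 'a set \<Rightarrow> 'a set set \<Rightarrow> 'a set set" where
  "TS_vertices X P V E = {S. S \<subseteq> V \<and> card S = X V E \<and> P V E S}"

definition TS_edges ::
  "('a set \<Rightarrow> 'a set set \<Rightarrow> nat) \<Rightarrow> ('a set \<Rightarrow> 'a set set \<Rightarrow> 'a set \<Rightarrow> bool)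
   \<Rightarrow> 'a set \<Rightarrow> 'a set set \<Rightarrow> 'a set set set" where
  "TS_edges X P V E = {{S1, S2} | S1 S2. S1 \<in> TS_vertices X P V E \<and> S2 \<in> TS_vertices X P V E \<and>
     (\<exists>v1 v2. v1 \<in> S1 - S2 \<and> v2 \<in> S2 - S1 \<and> S1 - {v1} = S2 - {v2} \<and> {v1, v2} \<in> E)}"

end

theory Submission
  imports Defs
begin

lemma card_int_remove:
  assumes "finite S" "v \<in> S"
  shows "card (S \<inter> A) = card ((S - {v}) \<inter> A) + (if v \<in> A then 1 else 0)"
proof -
  have "S = insert v (S - {v})" using assms by blast
  then have "S \<inter> A = (if v \<in> A then insert v ((S - {v}) \<inter> A) else (S - {v}) \<inter> A)" by auto
  then show ?thesis using assms by auto
qed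

theorem theorem2p16:
  fixes V :: "'a set" and E :: "'a set set"
    and X :: "'a set \<Rightarrow> 'a set set \<Rightarrow> nat"
    and P :: "'a set \<Rightarrow> 'a set set \<Rightarrow> 'a set \<Rightarrow> bool"
  assumes "simple_graph V E"
    and "bipartite V E"
    and "vertex_parameter X P"
  shows "bipartite (TS_vertices X P V E) (TS_edges X P V E)"
proof -
  have fin: "finite V" using assms(1) by (simp add: simple_graph_def)
  obtain A B where AB: "A \<union> B = V" "A \<inter> B = {}" "\<forall>e\<in>E. \<exists>a\<in>A. \<exists>b\<in>B. e = {a, b}"
    using assms(2) by (auto simp: bipartite_def)
  let ?T = "TS_vertices X P V E"
  define TA where "TA = {S \<in> ?T. even (card (S \<inter> A))}"
  define TB where "TB = {S \<in> ?T. odd (card (S \<inter> A))}"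
  have par: "even (card (S1 \<inter> A)) \<longleftrightarrow> odd (card (S2 \<inter> A))"
    if h: "S1 \<in> ?T" "S2 \<in> ?T" "v1 \<in> S1 - S2" "v2 \<in> S2 - S1" "S1 - {v1} = S2 - {v2}" "{v1, v2} \<in> E"
    for S1 S2 v1 v2
  proof -
    have f1: "finite S1" "finite S2" using h(1,2) fin
      by (auto simp: TS_vertices_def intro: finite_subset)
    obtain a b where ab: "a \<in> A" "b \<in> B" "{v1, v2} = {a, b}" using AB(3) h(6) by blast
    have x: "(v1 \<in> A) \<longleftrightarrow> \<not> (v2 \<in> A)" 
    proof -
      have "v1 \<noteq> v2" using h(3,4) by blast
      then have "(v1 = a \<and> v2 = b) \<or> (v1 = b \<and> v2 = a)" using ab(3) by (metis doubleton_eq_iff)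
      then show ?thesis using ab(1,2) AB(2) by blast
    qed
    have "card (S1 \<inter> A) = card ((S1 - {v1}) \<inter> A) + (if v1 \<in> A then 1 else 0)"
      using card_int_remove[OF f1(1), of v1 A] h(3) by simp
    moreover have "card (S2 \<inter> A) = card ((S2 - {v2}) \<inter> A) + (if v2 \<in> A then 1 else 0)"
      using card_int_remove[OF f1(2), of v2 A] h(4) by simp
    ultimately show ?thesis using h(5) x by (cases "v1 \<in> A") auto
  qed
  have u: "TA \<union> TB = ?T" unfolding TA_def TB_def by auto
  have d: "TA \<inter> TB = {}" unfolding TA_def TB_def by auto
  have ed: "\<exists>a\<in>TA. \<exists>b\<in>TB. e = {a, b}" if "e \<in> TS_edges X P V E" for e
  proof -
    from that obtain S1 S2 v1 v2 where e: "e = {S1, S2}" "S1 \<in> ?T" "S2 \<in> ?T" "v1 \<in> S1 - S2" "v2 \<in> S2 - S1"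
      "S1 - {v1} = S2 - {v2}" "{v1, v2} \<in> E"
      unfolding TS_edges_def by (elim CollectE exE conjE) blast
    have p: "even (card (S1 \<inter> A)) \<longleftrightarrow> odd (card (S2 \<inter> A))" by (rule par[OF e(2-7)])
    show ?thesis
    proof (cases "even (card (S1 \<inter> A))")
      case True
      have "S1 \<in> TA" "S2 \<in> TB" using True p e(2,3) unfolding TA_def TB_def by auto
      then show ?thesis using e(1) by blast
    next
      case False
      have "S2 \<in> TA" "S1 \<in> TB" using False p e(2,3) unfolding TA_def TB_def by auto
      moreover have "e = {S2, S1}" using e(1) by (simp add: insert_commute)
      ultimately show ?thesis by blast
    qed
  qed
  show ?thesis unfolding bipartite_def using u d ed by (intro exI[of _ TA] exI[of _ TB] conjI) auto
qed

end
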